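(* Let $n\ge1$ and let $A$ be a linear Nakayama algebra with $n+1$ simple modules whose Dyck path is $\mathcal D$. Then the number of isomorphism classes of indecomposable injective $A$-modules of projective dimension one is: (1) $n$, if $\mathcal D=u^nd^n$; (2) $d_1-1+\sum_{i=2}^{\ell-1}\max\{d_i-k_i-1,0\}+a_\ell-1$, if $\mathcal D=u^{a_1}d^{d_1}\cdots u^{a_\ell}d^{d_\ell}$ with $\ell\ge2$ and all $a_i,d_i\ge1$.
   Context: $K$ is a field; a linear Nakayama algebra with $n+1$ simple modules is a connected algebra $KQ/I$ with $Q$ the quiver $0\to1\to\cdots\to n$ and $I$ admissible; modules are finite-dimensional right modules; $e_iA$ is uniserial with composition factors $S_i,\dots,S_{i+c_i-1}$ (top to socle), $c_i=\dim_K e_iA$. The Dyck path of $A$ is the lattice path with steps $u=(1,1)$, $d=(1,-1)$ from $(0,0)$ to $(2n,0)$ whose vertex with first coordinate $x$ has height $h(x)=\max\{k-1: 0\le i\le n,\ 1\le k\le c_i,\ 2i+k-1=2n-x\}$ (the top boundary of the Auslander–Reiten quiver). For $\mathcal D=u^{a_1}d^{d_1}\cdots u^{a_\ell}d^{d_\ell}$ define $k_1=1$ and $k_i=k_{i-1}+a_{i-1}-d_{i-1}$ for $2\le i\le\ell$ (the level, i.e. height plus one, of the $(i-1)$-st valley). *)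

theory Defs
  imports Main
begin

text \<open>A linear Nakayama algebra A = KQ/I with n+1 simples (Q = 0 -> 1 -> ... -> n, I admissible,
  A connected) is determined up to isomorphism by its Kupisch series c_i = dim e_i A.\<close>
definition linear_nakayama :: "nat \<Rightarrow> (nat \<Rightarrow> nat) \<Rightarrow> bool" where
  "linear_nakayama n c \<longleftrightarrow> c n = 1 \<and> (\<forall>i<n. 2 \<le> c i \<and> c i \<le> c (Suc i) + 1)"

text \<open>Indecomposable modules (up to isomorphism) are the uniserial modules M(i,l) with top S_i
  and composition factors S_i, ..., S_(i+l-1), where i <= n and 1 <= l <= c_i.\<close>
definition indec :: "nat \<Rightarrow> (nat \<Rightarrow> nat) \<Rightarrow> nat \<times> nat \<Rightarrow> bool" where
  "indec n c M \<longleftrightarrow> fst M \<le> n \<and> 1 \<le> snd M \<and> snd M \<le> c (fst M)"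

definition is_projective :: "(nat \<Rightarrow> nat) \<Rightarrow> nat \<times> nat \<Rightarrow> bool" where
  "is_projective c M \<longleftrightarrow> snd M = c (fst M)"

text \<open>M(i,l) is injective iff it is not properly contained in M(i-1,l+1).\<close>
definition is_injective :: "(nat \<Rightarrow> nat) \<Rightarrow> nat \<times> nat \<Rightarrow> bool" where
  "is_injective c M \<longleftrightarrow> \<not> (0 < fst M \<and> snd M + 1 \<le> c (fst M - 1))"

text \<open>Syzygy: kernel of the projective cover e_i A -> M(i,l), namely M(i+l, c_i - l).\<close>
definition syzygy :: "(nat \<Rightarrow> nat) \<Rightarrow> nat \<times> nat \<Rightarrow> nat \<times> nat" where
  "syzygy c M = (fst M + snd M, c (fst M) - snd M)"

fun pd_le :: "(nat \<Rightarrow> nat) \<Rightarrow> nat \<Rightarrow> nat \<times> nat \<Rightarrow> bool" where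
  "pd_le c 0 M = is_projective c M"
| "pd_le c (Suc k) M = (is_projective c M \<or> pd_le c k (syzygy c M))"

definition pd_eq :: "(nat \<Rightarrow> nat) \<Rightarrow> nat \<Rightarrow> nat \<times> nat \<Rightarrow> bool" where
  "pd_eq c k M \<longleftrightarrow> pd_le c k M \<and> (\<forall>j<k. \<not> pd_le c j M)"

definition num_inj_pd1 :: "nat \<Rightarrow> (nat \<Rightarrow> nat) \<Rightarrow> nat" where
  "num_inj_pd1 n c = card {M. indec n c M \<and> is_injective c M \<and> pd_eq c 1 M}"

text \<open>Dyck path: height of the vertex with first coordinate x.\<close>
definition height :: "nat \<Rightarrow> (nat \<Rightarrow> nat) \<Rightarrow> nat \<Rightarrow> nat" where
  "height n c x = Max {k - 1 | i k. i \<le> n \<and> 1 \<le> k \<and> k \<le> c i \<and> 2*i + k - 1 = 2*n - x}"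

datatype step = U | D

definition dyck_path :: "nat \<Rightarrow> (nat \<Rightarrow> nat) \<Rightarrow> step list" where
  "dyck_path n c = map (\<lambda>x. if height n c x < height n c (Suc x) then U else D) [0..<2*n]"

definition dyck_word :: "nat list \<Rightarrow> nat list \<Rightarrow> step list" where
  "dyck_word as ds = concat (map (\<lambda>j. replicate (as!j) U @ replicate (ds!j) D) [0..<length as])"

text \<open>k_(j+1) in 0-based indexing: kval as ds 0 = k_1 = 1, kval (j+1) = kval j + a_(j+1) - d_(j+1).\<close>
fun kval :: "nat list \<Rightarrow> nat list \<Rightarrow> nat \<Rightarrow> int" where
  "kval as ds 0 = 1"
| "kval as ds (Suc j) = kval as ds j + int (as!j) - int (ds!j)"

end

theory Submission
  imports Defs
begin

lemma chain_aux:
  assumes ln: "linear_nakayama n c" and "j \<le> n"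
  shows "\<forall>i. i \<le> j \<longrightarrow> j - i = d \<longrightarrow> c i \<le> c j + d"
proof (induction d)
  case 0 then show ?case by auto
next
  case (Suc d)
  show ?case
  proof (intro allI impI)
    fix i assume "i \<le> j" "j - i = Suc d"
    then have "i < n" "Suc i \<le> j" "j - Suc i = d" using assms by auto
    then have "c i \<le> c (Suc i) + 1" using ln unfolding linear_nakayama_def by auto
    moreover have "c (Suc i) \<le> c j + d" using Suc \<open>Suc i \<le> j\<close> \<open>j - Suc i = d\<close> by blast
    ultimately show "c i \<le> c j + Suc d" by simp
  qed
qed

lemma chain:
  assumes "linear_nakayama n c" "i \<le> j" "j \<le> n"
  shows "c i \<le> c j + (j - i)"
  using chain_aux[OF assms(1,3)] assms(2) by blast

lemma cbound:
  assumes "linear_nakayama n c" "i \<le> n"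
  shows "c i + i \<le> n + 1"
  using chain[OF assms(1,2) order_refl] assms unfolding linear_nakayama_def by auto

lemma cge2:
  assumes "linear_nakayama n c" "i < n"
  shows "2 \<le> c i"
  using assms unfolding linear_nakayama_def by auto

definition mu :: "nat \<Rightarrow> (nat \<Rightarrow> nat) \<Rightarrow> nat \<Rightarrow> nat" where
  "mu n c x = (LEAST i. 2*n - 2*i < x + c i)"

lemma mu_props:
  assumes ln: "linear_nakayama n c" and x: "x \<le> 2*n"
  shows "2*n - 2*mu n c x < x + c (mu n c x)" "mu n c x \<le> n"
    "\<And>i. i < mu n c x \<Longrightarrow> \<not> (2*n - 2*i < x + c i)"
    "2 * mu n c x \<le> 2*n - x"
proof -
  have cn: "c n = 1" using ln unfolding linear_nakayama_def by auto
  have Pn: "2*n - 2*n < x + c n" using cn by simp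
  show P: "2*n - 2*mu n c x < x + c (mu n c x)" unfolding mu_def by (rule LeastI[where P="\<lambda>i. 2*n - 2*i < x + c i", OF Pn])
  show le: "mu n c x \<le> n" unfolding mu_def by (rule Least_le[where P="\<lambda>i. 2*n - 2*i < x + c i", OF Pn])
  show nP: "\<And>i. i < mu n c x \<Longrightarrow> \<not> (2*n - 2*i < x + c i)" unfolding mu_def by (rule not_less_Least)
  show "2 * mu n c x \<le> 2*n - x"
  proof (cases "mu n c x = 0")
    case True then show ?thesis by simp
  next
    case False
    then have a: "mu n c x - 1 < mu n c x" by simp
    have "\<not> (2*n - 2*(mu n c x - 1) < x + c (mu n c x - 1))" using nP[OF a] .
    moreover have "2 \<le> c (mu n c x - 1)" using cge2[OF ln] le False by simp
    ultimately show ?thesis using le False by linarith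
  qed
qed

lemma height_eq:
  assumes ln: "linear_nakayama n c" and x: "x \<le> 2*n"
  shows "height n c x = 2*n - x - 2 * mu n c x"
proof -
  let ?m = "mu n c x"
  note mp = mu_props[OF ln x]
  let ?T = "{k - 1 | i k. i \<le> n \<and> 1 \<le> k \<and> k \<le> c i \<and> 2*i + k - 1 = 2*n - x}"
  have fin: "finite ?T"
    by (rule finite_subset[of _ "{..2*n}"]) auto
  have mem: "2*n - x - 2 * ?m \<in> ?T"
  proof -
    have "2*n - x - 2 * ?m = (2*n - x - 2 * ?m + 1) - 1" by simp
    moreover have "?m \<le> n \<and> 1 \<le> (2*n - x - 2 * ?m + 1) \<and> (2*n - x - 2 * ?m + 1) \<le> c ?m
       \<and> 2*?m + (2*n - x - 2 * ?m + 1) - 1 = 2*n - x"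
      using mp(1,2,4) x by (intro conjI; linarith)
    ultimately show ?thesis by blast
  qed
  have bound: "y \<le> 2*n - x - 2 * ?m" if yT: "y \<in> ?T" for y
  proof -
    obtain i k where ik: "y = k - 1" "i \<le> n" "1 \<le> k" "k \<le> c i" "2*i + k - 1 = 2*n - x"
      using yT by blast
    have "2*n - 2*i < x + c i" using ik x by linarith
    then have "\<not> i < ?m" using mp(3) by blast
    then show ?thesis using ik by linarith
  qed
  show ?thesis unfolding height_def
    by (rule Max_eqI[OF fin bound mem])
qed

lemma dp_nth:
  assumes ln: "linear_nakayama n c" and x: "x < 2*n"
  shows "(dyck_path n c ! x = U) \<longleftrightarrow> (\<exists>j<n. 2*n - 2*j = x + c j)"
proof -
  have x1: "x \<le> 2*n" "Suc x \<le> 2*n" using x by auto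
  note m0 = mu_props[OF ln x1(1)] and m1 = mu_props[OF ln x1(2)]
  have h0: "height n c x = 2*n - x - 2 * mu n c x" by (rule height_eq[OF ln x1(1)])
  have h1: "height n c (Suc x) = 2*n - Suc x - 2 * mu n c (Suc x)" by (rule height_eq[OF ln x1(2)])
  have mono: "mu n c (Suc x) \<le> mu n c x"
    unfolding mu_def[of n c "Suc x"] by (rule Least_le) (use m0(1) in linarith)
  have nth: "dyck_path n c ! x = (if height n c x < height n c (Suc x) then U else D)"
    unfolding dyck_path_def using x by simp
  have iff1: "height n c x < height n c (Suc x) \<longleftrightarrow> mu n c (Suc x) < mu n c x"
    using h0 h1 mono m0(4) m1(4) by linarith
  have iff2: "mu n c (Suc x) < mu n c x \<longleftrightarrow> (\<exists>j<n. 2*n - 2*j = x + c j)"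
  proof
    assume lt: "mu n c (Suc x) < mu n c x"
    let ?j = "mu n c (Suc x)"
    have "\<not> (2*n - 2*?j < x + c ?j)" using m0(3)[OF lt] .
    moreover have "2*n - 2*?j < Suc x + c ?j" using m1(1) .
    moreover have "?j < n" using lt m0(2) by linarith
    ultimately show "\<exists>j<n. 2*n - 2*j = x + c j" by (intro exI[of _ ?j]) auto
  next
    assume "\<exists>j<n. 2*n - 2*j = x + c j"
    then obtain j where j: "j < n" "2*n - 2*j = x + c j" by blast
    have a: "mu n c (Suc x) \<le> j"
      unfolding mu_def[of n c "Suc x"] by (rule Least_le) (use j in linarith)
    have b: "\<not> (2*n - 2*i < x + c i)" if "i \<le> j" for i
    proof -
      have "c i \<le> c j + (j - i)" using chain[OF ln that] j by simp
      then show ?thesis using j that by linarith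
    qed
    have "j < mu n c x"
    proof (rule ccontr)
      assume "\<not> j < mu n c x"
      then show False using b[of "mu n c x"] m0(1) by simp
    qed
    then show "mu n c (Suc x) < mu n c x" using a by linarith
  qed
  show ?thesis using nth iff1 iff2 by auto
qed


definition pp :: "nat \<Rightarrow> (nat \<Rightarrow> nat) \<Rightarrow> nat \<Rightarrow> nat" where
  "pp n c j = 2*n - 2*j - c j"

definition cntU :: "step list \<Rightarrow> nat \<Rightarrow> nat" where
  "cntU w p = card {x. x < p \<and> x < length w \<and> w!x = U}"

lemma pp_props:
  assumes ln: "linear_nakayama n c" and j: "j < n"
  shows "2*n - 2*j = pp n c j + c j" "pp n c j < 2*n"
proof -
  have "c j + j \<le> n + 1" using cbound[OF ln] j by simp
  moreover have "2 \<le> c j" using cge2[OF ln j] .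
  ultimately show "2*n - 2*j = pp n c j + c j" "pp n c j < 2*n" unfolding pp_def using j by linarith+
qed

lemma pp_strict:
  assumes ln: "linear_nakayama n c" and "j < j'" "j' < n"
  shows "pp n c j' < pp n c j"
proof -
  have "c j \<le> c j' + (j' - j)" using chain[OF ln] assms by simp
  then show ?thesis using pp_props[OF ln, of j] pp_props[OF ln, of j'] assms by linarith
qed

lemma pp_inj: assumes ln: "linear_nakayama n c" shows "inj_on (pp n c) {..<n}"
proof (rule inj_onI)
  fix a b assume "a \<in> {..<n}" "b \<in> {..<n}" "pp n c a = pp n c b"
  then show "a = b" using pp_strict[OF ln, of a b] pp_strict[OF ln, of b a]
    by (metis lessThan_iff less_irrefl linorder_neqE_nat)
qed

lemma dp_len: "length (dyck_path n c) = 2*n"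
  unfolding dyck_path_def by simp

lemma dpU:
  assumes ln: "linear_nakayama n c" and x: "x < 2*n"
  shows "(dyck_path n c ! x = U) \<longleftrightarrow> x \<in> pp n c ` {..<n}"
proof -
  have "(\<exists>j<n. 2*n - 2*j = x + c j) \<longleftrightarrow> (\<exists>j<n. x = pp n c j)"
    using pp_props[OF ln] by (metis add_right_cancel)
  then show ?thesis using dp_nth[OF ln x] by auto
qed

lemma Uset_dp:
  assumes ln: "linear_nakayama n c"
  shows "{x. x < p \<and> x < length (dyck_path n c) \<and> dyck_path n c ! x = U}
       = {x \<in> pp n c ` {..<n}. x < p}"
  using dpU[OF ln] pp_props(2)[OF ln] unfolding dp_len by auto

lemma cnt_dp:
  assumes ln: "linear_nakayama n c" and j: "j < n"
  shows "cntU (dyck_path n c) (pp n c j) = n - 1 - j"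
proof -
  have "{x \<in> pp n c ` {..<n}. x < pp n c j} = pp n c ` {Suc j..<n}"
  proof
    show "{x \<in> pp n c ` {..<n}. x < pp n c j} \<subseteq> pp n c ` {Suc j..<n}"
    proof
      fix x assume "x \<in> {x \<in> pp n c ` {..<n}. x < pp n c j}"
      then obtain j' where j': "j' < n" "x = pp n c j'" "pp n c j' < pp n c j" by auto
      have "\<not> j' \<le> j"
      proof
        assume "j' \<le> j"
        then show False using pp_strict[OF ln, of j' j] j j' by (cases "j' = j") auto
      qed
      then show "x \<in> pp n c ` {Suc j..<n}" using j' by auto
    qed
  next
    show "pp n c ` {Suc j..<n} \<subseteq> {x \<in> pp n c ` {..<n}. x < pp n c j}"
      using pp_strict[OF ln, of j] by auto
  qed
  moreover have "card (pp n c ` {Suc j..<n}) = n - 1 - j"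
    by (subst card_image) (auto intro: inj_on_subset[OF pp_inj[OF ln]])
  ultimately show ?thesis unfolding cntU_def Uset_dp[OF ln] by simp
qed

lemma total_dp:
  assumes ln: "linear_nakayama n c"
  shows "card {x. x < length (dyck_path n c) \<and> dyck_path n c ! x = U} = n"
proof -
  have "{x. x < length (dyck_path n c) \<and> dyck_path n c ! x = U}
       = {x. x < 2*n \<and> x < length (dyck_path n c) \<and> dyck_path n c ! x = U}"
    unfolding dp_len by auto
  also have "\<dots> = pp n c ` {..<n}" unfolding Uset_dp[OF ln] using pp_props(2)[OF ln] by auto
  finally show ?thesis using card_image[OF pp_inj[OF ln]] by simp
qed

lemma cntU_unique:
  assumes "p < length w" "p' < length w" "w!p = U" "w!p' = U" "cntU w p = cntU w p'"
  shows "p = p'"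
proof (rule ccontr)
  have gen: "cntU w a < cntU w b" if "a < b" "a < length w" "w!a = U" for a b
  proof -
    have "{x. x < a \<and> x < length w \<and> w!x = U} \<subset> {x. x < b \<and> x < length w \<and> w!x = U}"
      using that by auto
    then show ?thesis unfolding cntU_def by (rule psubset_card_mono[rotated]) simp
  qed
  assume "p \<noteq> p'"
  then show False using gen[of p p'] gen[of p' p] assms by (cases "p < p'") auto
qed


definition blk :: "nat list \<Rightarrow> nat list \<Rightarrow> nat \<Rightarrow> step list" where
  "blk as ds j = replicate (as!j) U @ replicate (ds!j) D"

definition Af :: "nat list \<Rightarrow> nat \<Rightarrow> nat" where
  "Af xs q = (\<Sum>t<q. xs!t)"

lemma Af_Suc: "Af xs (Suc q) = Af xs q + xs!q"
  unfolding Af_def by simp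

lemma Af_0: "Af xs 0 = 0" unfolding Af_def by simp

lemma dw_blk: "dyck_word as ds = concat (map (blk as ds) [0..<length as])"
  unfolding dyck_word_def blk_def by simp

lemma len_pre: "length (concat (map (blk as ds) [0..<q])) = Af as q + Af ds q"
  by (induction q) (auto simp: Af_Suc Af_0 blk_def)

lemma cnt_pre: "length (filter (\<lambda>s. s = U) (concat (map (blk as ds) [0..<q]))) = Af as q"
  by (induction q) (auto simp: Af_Suc Af_0 blk_def filter_replicate)

lemma dw_split:
  assumes "q < length as"
  shows "dyck_word as ds = concat (map (blk as ds) [0..<q]) @ blk as ds q
           @ concat (map (blk as ds) [Suc q..<length as])"
proof -
  have "[0..<length as] = [0..<q] @ [q..<length as]"
    using assms by (metis le_add_diff_inverse less_imp_le_nat upt_add_eq_append zero_le)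
  also have "[q..<length as] = q # [Suc q..<length as]" using assms by (rule upt_conv_Cons)
  finally show ?thesis unfolding dw_blk by simp
qed

lemma cntU_filter:
  assumes "p \<le> length w"
  shows "cntU w p = length (filter (\<lambda>s. s = U) (take p w))"
proof -
  have "{x. x < p \<and> x < length w \<and> w!x = U} = {i. i < length (take p w) \<and> take p w ! i = U}"
    using assms by auto
  then show ?thesis unfolding cntU_def length_filter_conv_card by simp
qed

lemma dw_U:
  assumes q: "q < length as" and t: "t < as!q"
  shows "Af as q + Af ds q + t < length (dyck_word as ds)"
    "dyck_word as ds ! (Af as q + Af ds q + t) = U"
    "cntU (dyck_word as ds) (Af as q + Af ds q + t) = Af as q + t"
proof -
  let ?pre = "concat (map (blk as ds) [0..<q])" and ?post = "concat (map (blk as ds) [Suc q..<length as])"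
  have w: "dyck_word as ds = ?pre @ blk as ds q @ ?post" by (rule dw_split[OF q])
  have lp: "length ?pre = Af as q + Af ds q" by (rule len_pre)
  have lb: "t < length (blk as ds q)" using t unfolding blk_def by simp
  show l: "Af as q + Af ds q + t < length (dyck_word as ds)" unfolding w using lp lb by simp
  show "dyck_word as ds ! (Af as q + Af ds q + t) = U"
    unfolding w using lp lb t by (simp add: nth_append blk_def)
  have tk: "take (Af as q + Af ds q + t) (dyck_word as ds) = ?pre @ replicate t U"
    unfolding w using lp t by (simp add: blk_def)
  show "cntU (dyck_word as ds) (Af as q + Af ds q + t) = Af as q + t"
    using l by (subst cntU_filter) (auto simp: tk cnt_pre)
qed

lemma dw_total:
  "card {x. x < length (dyck_word as ds) \<and> dyck_word as ds ! x = U} = Af as (length as)"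
proof -
  have "{x. x < length (dyck_word as ds) \<and> dyck_word as ds ! x = U}
     = {i. i < length (dyck_word as ds) \<and> dyck_word as ds ! i = U}" by simp
  then show ?thesis
    using cnt_pre[of as ds "length as"] unfolding dw_blk[symmetric] length_filter_conv_card by simp
qed


lemma KF:
  assumes ln: "linear_nakayama n c" and eq: "dyck_path n c = dyck_word as ds"
    and q: "q < length as" and t: "t < as!q"
  shows "Af as q + t < n"
    "int (c (n - 1 - (Af as q + t))) = int (Af as q + t) + 2 - int (Af ds q)"
proof -
  let ?P = "Af as q + Af ds q + t"
  note w = dw_U[OF q t, of ds, folded eq]
  have "?P < 2*n" using w(1) unfolding dp_len .
  then have "?P \<in> pp n c ` {..<n}" using dpU[OF ln] w(2) by blast
  then obtain j where j: "j < n" "?P = pp n c j" by auto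
  have "cntU (dyck_path n c) (pp n c j) = Af as q + t" using w(3) j(2) by metis
  then have "n - 1 - j = Af as q + t" using cnt_dp[OF ln j(1)] by linarith
  then have r: "Af as q + t < n" "j = n - 1 - (Af as q + t)" using j(1) by auto
  show "Af as q + t < n" by (rule r(1))
  have e: "2*n - 2*j = ?P + c j" using pp_props(1)[OF ln j(1)] j(2) by presburger
  have e2: "j + (Af as q + t) + 1 = n" using r by linarith
  have "int (c j) = int (Af as q + t) + 2 - int (Af ds q)"
    using e e2 by linarith
  then show "int (c (n - 1 - (Af as q + t))) = int (Af as q + t) + 2 - int (Af ds q)"
    using r(2) by simp
qed

lemma n_eq:
  assumes ln: "linear_nakayama n c" and eq: "dyck_path n c = dyck_word as ds"
  shows "n = Af as (length as)"
  using total_dp[OF ln] dw_total[of as ds] unfolding eq by simp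


lemma Af_mono: "q \<le> q' \<Longrightarrow> Af xs q \<le> Af xs q'"
  by (induction q' rule: dec_induct) (auto simp: Af_Suc)

lemma Af_strict:
  assumes "q < q'" "q' \<le> length xs" "\<forall>j<length xs. 1 \<le> xs!j"
  shows "Af xs q < Af xs q'"
proof -
  have "1 \<le> xs!q" using assms by auto
  then have "Af xs q < Af xs (Suc q)" by (simp add: Af_Suc)
  also have "\<dots> \<le> Af xs q'" using assms by (intro Af_mono) simp
  finally show ?thesis .
qed

lemma decomp:
  fixes F :: "nat \<Rightarrow> nat"
  assumes "r < F m" "F 0 = 0"
  shows "\<exists>q<m. F q \<le> r \<and> r < F (Suc q)"
  using assms
proof (induction m)
  case 0 then show ?case by simp
next
  case (Suc m)
  show ?case
  proof (cases "r < F m")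
    case True then show ?thesis using Suc by (meson less_SucI)
  next
    case False then show ?thesis using Suc by auto
  qed
qed

lemma blk_order:
  assumes "Af xs q \<le> r" "r < Af xs (Suc q)" "Af xs q' \<le> r'" "r' < Af xs (Suc q')" "r' \<le> r"
  shows "q' \<le> q"
proof (rule ccontr)
  assume "\<not> q' \<le> q"
  then have "Af xs (Suc q) \<le> Af xs q'" by (intro Af_mono) simp
  then show False using assms by linarith
qed

definition Sset :: "nat \<Rightarrow> (nat \<Rightarrow> nat) \<Rightarrow> (nat \<times> nat) set" where
  "Sset n c = {M. indec n c M \<and> is_injective c M \<and> pd_eq c 1 M}"

lemma S_char:
  "(i, l) \<in> Sset n c \<longleftrightarrow> i \<le> n \<and> 1 \<le> l \<and> l < c i \<and> (i = 0 \<or> c (i - 1) \<le> l) \<and> c i - l = c (i + l)"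
  unfolding Sset_def indec_def is_injective_def pd_eq_def
  by (auto simp: is_projective_def syzygy_def)

locale nksetup =
  fixes n :: nat and c :: "nat \<Rightarrow> nat" and as ds :: "nat list"
  assumes ln: "linear_nakayama n c" and n1: "1 \<le> n" and len: "length as = length ds"
    and l1: "1 \<le> length as"
    and pos: "\<forall>j<length as. 1 \<le> as!j \<and> 1 \<le> ds!j"
    and eq: "dyck_path n c = dyck_word as ds"
begin

abbreviation "ell \<equiv> length as"

lemma posA: "\<forall>j<length as. 1 \<le> as!j" using pos by auto
lemma posD: "\<forall>j<length ds. 1 \<le> ds!j" using pos len by auto

lemma nA: "n = Af as ell" by (rule n_eq[OF ln eq])

lemma KF2:
  assumes q: "q < ell" and r: "Af as q \<le> r" "r < Af as (Suc q)"
  shows "int (c (n - 1 - r)) = int r + 2 - int (Af ds q)" "r < n"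
proof -
  have t: "r - Af as q < as!q" using r by (simp add: Af_Suc)
  have e: "Af as q + (r - Af as q) = r" using r by simp
  show "int (c (n - 1 - r)) = int r + 2 - int (Af ds q)" using KF(2)[OF ln eq q t] e by simp
  show "r < n" using KF(1)[OF ln eq q t] e by simp
qed

lemma DleA:
  assumes q: "q < ell"
  shows "Af ds q \<le> Af as q"
proof -
  have "1 \<le> as!q" using posA q by auto
  then have a: "Af as q < Af as (Suc q)" by (simp add: Af_Suc)
  note k = KF2[OF q order_refl a]
  have "2 \<le> c (n - 1 - Af as q)" using cge2[OF ln] k(2) by simp
  then show ?thesis using k(1) by linarith
qed

lemma D_strict:
  assumes "q' < q" "q \<le> ell"
  shows "Af ds q' < Af ds q"
  using Af_strict[OF assms(1) _ posD] assms len by simp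

lemma A_strict:
  assumes "q' < q" "q \<le> ell"
  shows "Af as q' < Af as q"
  using Af_strict[OF assms posA] .

definition Lset :: "nat \<Rightarrow> nat set" where
  "Lset q = {l. 1 \<le> l \<and> (l \<le> as!q - 1 \<or> (q = 0 \<and> l = as!q))
      \<and> (Suc q < ell \<longrightarrow> int (Af as (Suc q)) + 2 - int (Af ds (Suc q)) \<le> int l)}"

lemma S_sub:
  assumes M: "(i, l) \<in> Sset n c"
  shows "\<exists>q<ell. i = n - Af as (Suc q) \<and> l \<in> Lset q"
proof -
  have m: "i \<le> n" "1 \<le> l" "l < c i" "i = 0 \<or> c (i - 1) \<le> l" "c i - l = c (i + l)"
    using M unfolding S_char by auto
  have cn: "c n = 1" using ln unfolding linear_nakayama_def by auto
  have iln: "i < n" using m cn by (cases "i = n") auto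
  define r where "r = n - 1 - i"
  have rn: "r < Af as ell" using iln nA unfolding r_def by linarith
  obtain q where q: "q < ell" "Af as q \<le> r" "r < Af as (Suc q)"
    using decomp[of r "Af as" ell, OF rn Af_0] by blast
  note kq = KF2[OF q]
  have ir: "i = n - 1 - r" using iln unfolding r_def by simp
  have ci: "int (c i) = int r + 2 - int (Af ds q)" using kq(1) ir by simp
  have ilen: "i + l \<le> n" using cbound[OF ln m(1)] m(3) by linarith
  have C1: "l \<le> r - Af as q \<or> (q = 0 \<and> l = r - Af as q + 1)"
  proof (cases "i + l = n")
    case True
    then have "c i = l + 1" using m(3,5) cn by simp
    moreover have "l = r + 1" using True iln unfolding r_def by linarith
    ultimately have "Af ds q = 0" using ci by linarith
    then have "q = 0" using D_strict[of 0 q] q(1) Af_0[of ds] by (cases "q = 0") auto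
    then show ?thesis using \<open>l = r + 1\<close> Af_0[of as] by simp
  next
    case False
    then have lr: "l \<le> r" using ilen iln unfolding r_def by linarith
    have r'n: "r - l < Af as ell" using rn by linarith
    obtain q' where q': "q' < ell" "Af as q' \<le> r - l" "r - l < Af as (Suc q')"
      using decomp[of "r - l" "Af as" ell, OF r'n Af_0] by blast
    have qq: "q' \<le> q" by (rule blk_order[OF q(2,3) q'(2,3)]) simp
    note kq' = KF2[OF q']
    have "i + l = n - 1 - (r - l)" using lr ir iln False kq(2) by linarith
    then have "int (c (i + l)) = int (r - l) + 2 - int (Af ds q')" using kq'(1) by simp
    moreover have "int (c (i + l)) = int (c i) - int l" using m(3,5) by simp
    ultimately have "Af ds q' = Af ds q" using ci lr by linarith
    then have "q' = q" using D_strict[of q' q] q(1) qq by (cases "q' = q") auto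
    then have "Af as q \<le> r - l" using q'(2) by simp
    then have "l \<le> r - Af as q" using lr by linarith
    then show ?thesis by blast
  qed
  have C2: "r = Af as (Suc q) - 1"
  proof (cases "i = 0")
    case True
    then have rr: "r = Af as ell - 1" using nA unfolding r_def by simp
    have "Suc q = ell"
    proof (rule ccontr)
      assume "Suc q \<noteq> ell"
      then have "Suc q < ell" using q(1) by simp
      then have "Af as (Suc q) < Af as ell" using A_strict by simp
      then show False using q(3) rr by linarith
    qed
    then show ?thesis using rr by simp
  next
    case False
    then have cl: "c (i - 1) \<le> l" using m(4) by simp
    show ?thesis
    proof (rule ccontr)
      assume "r \<noteq> Af as (Suc q) - 1"
      then have r1: "r + 1 < Af as (Suc q)" using q(3) by linarith
      have "int (c (n - 1 - (r + 1))) = int (r + 1) + 2 - int (Af ds q)"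
        using KF2(1)[OF q(1) _ r1] q(2) by simp
      moreover have "n - 1 - (r + 1) = i - 1" using ir by simp
      ultimately have "int (c (i - 1)) = int (r + 1) + 2 - int (Af ds q)" by simp
      moreover have "l \<le> r - Af as q + 1" using C1 by auto
      ultimately show False using cl DleA[OF q(1)] q(2) by linarith
    qed
  qed
  have iq: "i = n - Af as (Suc q)" using ir C2 q(3) by linarith
  have A1: "r - Af as q = as!q - 1" using C2 by (simp add: Af_Suc)
  have L: "l \<in> Lset q"
    unfolding Lset_def
  proof (intro CollectI conjI impI)
    show "1 \<le> l" by (rule m(2))
    show "l \<le> as!q - 1 \<or> (q = 0 \<and> l = as!q)" using C1 A1 posA q(1) by auto
  next
    assume sq: "Suc q < ell"
    have "Af as (Suc q) < Af as ell" using A_strict[OF _ order_refl] sq by simp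
    then have "i \<noteq> 0" using iq nA by simp
    then have cl: "c (i - 1) \<le> l" using m(4) by simp
    have "1 \<le> as!Suc q" using posA sq by auto
    then have a: "Af as (Suc q) < Af as (Suc (Suc q))" by (simp add: Af_Suc)
    have "int (c (n - 1 - Af as (Suc q))) = int (Af as (Suc q)) + 2 - int (Af ds (Suc q))"
      using KF2(1)[OF sq order_refl a] .
    moreover have "n - 1 - Af as (Suc q) = i - 1" using iq by simp
    ultimately show "int (Af as (Suc q)) + 2 - int (Af ds (Suc q)) \<le> int l" using cl by simp
  qed
  show ?thesis using q(1) iq L by blast
qed

end


context nksetup begin

lemma S_sup:
  assumes q: "q < ell" and L: "l \<in> Lset q"
  shows "(n - Af as (Suc q), l) \<in> Sset n c"
proof -
  have L1: "1 \<le> l" "l \<le> as!q - 1 \<or> (q = 0 \<and> l = as!q)"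
    "Suc q < ell \<Longrightarrow> int (Af as (Suc q)) + 2 - int (Af ds (Suc q)) \<le> int l"
    using L unfolding Lset_def by auto
  have aq: "1 \<le> as!q" using posA q by auto
  have cn: "c n = 1" using ln unfolding linear_nakayama_def by auto
  define i where "i = n - Af as (Suc q)"
  define r where "r = Af as (Suc q) - 1"
  have Aq: "Af as (Suc q) = Af as q + as!q" by (simp add: Af_Suc)
  have An: "Af as (Suc q) \<le> n" using nA Af_mono[of "Suc q" ell as] q by simp
  have r1: "Af as q \<le> r" "r < Af as (Suc q)" using aq Aq unfolding r_def by linarith+
  note kr = KF2[OF q r1]
  have ir: "i = n - 1 - r" using An aq Aq unfolding i_def r_def by linarith
  have ci: "int (c i) = int (Af as q) + int (as!q) + 1 - int (Af ds q)"
    using kr(1) ir Aq aq unfolding r_def by simp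
  have dle: "Af ds q \<le> Af as q" by (rule DleA[OF q])
  have lle: "l \<le> as!q" using L1(2) by auto
  have lc: "l < c i" using ci dle lle by linarith
  have inj: "i = 0 \<or> c (i - 1) \<le> l"
  proof (cases "Suc q < ell")
    case True
    have "1 \<le> as!Suc q" using posA True by auto
    then have a: "Af as (Suc q) < Af as (Suc (Suc q))" by (simp add: Af_Suc)
    have "int (c (n - 1 - Af as (Suc q))) = int (Af as (Suc q)) + 2 - int (Af ds (Suc q))"
      using KF2(1)[OF True order_refl a] .
    moreover have "n - 1 - Af as (Suc q) = i - 1" unfolding i_def by simp
    ultimately have "int (c (i - 1)) = int (Af as (Suc q)) + 2 - int (Af ds (Suc q))" by simp
    then show ?thesis using L1(3)[OF True] by linarith
  next
    case False
    then have "Suc q = ell" using q by simp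
    then show ?thesis unfolding i_def using nA by simp
  qed
  have syz: "c i - l = c (i + l)"
  proof (cases "l \<le> as!q - 1")
    case True
    have r2: "Af as q \<le> r - l" "r - l < Af as (Suc q)" using True r1 Aq aq unfolding r_def by linarith+
    note kr2 = KF2[OF q r2]
    have "i + l = n - 1 - (r - l)" using ir True kr(2) r1 Aq aq unfolding r_def by linarith
    then have "int (c (i + l)) = int (r - l) + 2 - int (Af ds q)" using kr2(1) by simp
    then have "int (c (i + l)) = int (c i) - int l" using ci True Aq aq unfolding r_def by linarith
    then show ?thesis using lc by linarith
  next
    case False
    then have "q = 0" "l = as!q" using L1(2) by auto
    then have "i + l = n" using An Aq Af_0[of as] unfolding i_def by simp
    moreover have "c i = l + 1" using ci \<open>q = 0\<close> \<open>l = as!q\<close> Af_0[of as] Af_0[of ds] by simp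
    ultimately show ?thesis using cn by simp
  qed
  have "i \<le> n" unfolding i_def by simp
  then have "(i, l) \<in> Sset n c" unfolding S_char using L1(1) lc inj syz by blast
  then show ?thesis unfolding i_def .
qed

lemma S_eq: "Sset n c = (\<Union>q<ell. (\<lambda>l. (n - Af as (Suc q), l)) ` Lset q)"
proof
  show "Sset n c \<subseteq> (\<Union>q<ell. (\<lambda>l. (n - Af as (Suc q), l)) ` Lset q)"
  proof
    fix M assume "M \<in> Sset n c"
    moreover obtain i l where "M = (i, l)" by fastforce
    ultimately show "M \<in> (\<Union>q<ell. (\<lambda>l. (n - Af as (Suc q), l)) ` Lset q)"
      using S_sub by blast
  qed
next
  show "(\<Union>q<ell. (\<lambda>l. (n - Af as (Suc q), l)) ` Lset q) \<subseteq> Sset n c"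
    using S_sup by blast
qed

lemma Lset_fin: "finite (Lset q)"
  by (rule finite_subset[of _ "{..as!q}"]) (auto simp: Lset_def)

lemma card_S: "card (Sset n c) = (\<Sum>q<ell. card (Lset q))"
proof -
  have disj: "((\<lambda>l. (n - Af as (Suc q), l)) ` Lset q) \<inter> ((\<lambda>l. (n - Af as (Suc q'), l)) ` Lset q') = {}"
    if "q \<in> {..<ell}" "q' \<in> {..<ell}" "q \<noteq> q'" for q q'
  proof -
    have "Af as (Suc q) \<le> n" "Af as (Suc q') \<le> n" using nA Af_mono[of _ ell as] that by auto
    moreover have "Af as (Suc q) \<noteq> Af as (Suc q')"
      using A_strict[of "Suc q" "Suc q'"] A_strict[of "Suc q'" "Suc q"] that
      by (cases "q < q'") auto
    ultimately have "n - Af as (Suc q) \<noteq> n - Af as (Suc q')" by linarith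
    then show ?thesis by auto
  qed
  have "card (Sset n c) = (\<Sum>q<ell. card ((\<lambda>l. (n - Af as (Suc q), l)) ` Lset q))"
    unfolding S_eq by (rule card_UN_disjoint) (auto simp: Lset_fin disj)
  also have "\<dots> = (\<Sum>q<ell. card (Lset q))"
    by (rule sum.cong) (auto simp: card_image inj_on_def)
  finally show ?thesis .
qed

end


lemma kval_eq: "kval as ds j = 1 + int (Af as j) - int (Af ds j)"
  by (induction j) (auto simp: Af_Suc Af_0)

context nksetup begin

lemma L_single:
  assumes "ell = 1" shows "card (Lset 0) = as!0"
proof -
  have "Lset 0 = {1..as!0}" unfolding Lset_def using assms by auto
  then show ?thesis by simp
qed

lemma L_first:
  assumes "2 \<le> ell" shows "int (card (Lset 0)) = int (ds!0) - 1"
proof -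
  have A1: "Af as (Suc 0) = as!0" "Af ds (Suc 0) = ds!0" by (simp_all add: Af_Suc Af_0)
  have "Af ds 1 \<le> Af as 1" using DleA[of 1] assms by simp
  then have le: "ds!0 \<le> as!0" using A1 by simp
  have "0 < ell" using assms by linarith
  then have d1: "1 \<le> ds!0" using pos by blast
  have "Lset 0 = {as!0 + 2 - ds!0 .. as!0}"
    unfolding Lset_def using assms A1 le d1 \<open>0 < ell\<close> by auto
  then show ?thesis using le d1 by simp
qed

lemma L_mid:
  assumes "0 < q" "Suc q < ell"
  shows "int (card (Lset q)) = max (int (ds!q) - kval as ds q - 1) 0"
proof -
  have A1: "Af as (Suc q) = Af as q + as!q" "Af ds (Suc q) = Af ds q + ds!q" by (simp_all add: Af_Suc)
  have le: "Af ds (Suc q) \<le> Af as (Suc q)" using DleA[of "Suc q"] assms by simp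
  define lo where "lo = Af as q + as!q + 2 - (Af ds q + ds!q)"
  have lo: "int lo = int (Af as (Suc q)) + 2 - int (Af ds (Suc q))" "2 \<le> lo"
    using A1 le unfolding lo_def by linarith+
  have "Lset q = {lo .. as!q - 1}"
    unfolding Lset_def using assms lo by auto
  moreover have "1 \<le> as!q" using posA assms by auto
  ultimately have "card (Lset q) = as!q - lo" by simp
  then show ?thesis using lo A1 kval_eq[of as ds q] by linarith
qed

lemma L_last:
  assumes "2 \<le> ell" shows "card (Lset (ell - 1)) = as!(ell - 1) - 1"
proof -
  have "Lset (ell - 1) = {1 .. as!(ell - 1) - 1}"
    unfolding Lset_def using assms by auto
  then show ?thesis by simp
qed

lemma result_gen:
  assumes "2 \<le> ell"
  shows "int (card (Sset n c)) = int (ds!0) - 1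
          + (\<Sum>j\<in>{1..ell - 2}. max (int (ds!j) - kval as ds j - 1) 0)
          + int (as!(ell - 1)) - 1"
proof -
  have split: "{..<ell} = insert 0 (insert (ell - 1) {1..ell - 2})" using assms by auto
  have "int (card (Sset n c)) = (\<Sum>q<ell. int (card (Lset q)))" unfolding card_S by simp
  also have "\<dots> = int (card (Lset 0)) + (int (card (Lset (ell - 1))) + (\<Sum>q\<in>{1..ell - 2}. int (card (Lset q))))"
  proof -
    have n1: "ell - 1 \<notin> {1..ell - 2}" "0 \<notin> insert (ell - 1) {1..ell - 2}" using assms by auto
    show ?thesis unfolding split
      by (simp only: sum.insert[OF finite_insert[THEN iffD2, OF finite_atLeastAtMost] n1(2)]
                     sum.insert[OF finite_atLeastAtMost n1(1)])
  qed
  also have "(\<Sum>q\<in>{1..ell - 2}. int (card (Lset q))) = (\<Sum>j\<in>{1..ell - 2}. max (int (ds!j) - kval as ds j - 1) 0)"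
    by (rule sum.cong) (use L_mid in auto)
  also have "int (card (Lset (ell - 1))) = int (as!(ell - 1)) - 1"
    using L_last[OF assms] posA assms by (simp add: of_nat_diff)
  finally show ?thesis using L_first[OF assms] by simp
qed

end


lemma num_eq: "num_inj_pd1 n c = card (Sset n c)"
  unfolding num_inj_pd1_def Sset_def ..

theorem mainTheorem10:
  fixes n :: nat and c :: "nat \<Rightarrow> nat"
  assumes "1 \<le> n" and "linear_nakayama n c"
  shows "(dyck_path n c = replicate n U @ replicate n D \<longrightarrow> num_inj_pd1 n c = n)
    \<and> (\<forall>as ds. length as = length ds \<and> 2 \<le> length as
          \<and> (\<forall>j<length as. 1 \<le> as!j \<and> 1 \<le> ds!j)
          \<and> dyck_path n c = dyck_word as ds \<longrightarrow>
        int (num_inj_pd1 n c) =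
          int (ds!0) - 1
          + (\<Sum>j\<in>{1..length as - 2}. max (int (ds!j) - kval as ds j - 1) 0)
          + int (as!(length as - 1)) - 1)"
proof (intro conjI impI allI)
  assume h: "dyck_path n c = replicate n U @ replicate n D"
  have "dyck_word [n] [n] = replicate n U @ replicate n D" unfolding dyck_word_def by simp
  then interpret nksetup n c "[n]" "[n]"
    by unfold_locales (use assms h in auto)
  show "num_inj_pd1 n c = n" unfolding num_eq card_S using L_single by simp
next
  fix as ds :: "nat list"
  assume h: "length as = length ds \<and> 2 \<le> length as \<and> (\<forall>j<length as. 1 \<le> as!j \<and> 1 \<le> ds!j)
          \<and> dyck_path n c = dyck_word as ds"
  then interpret nksetup n c as ds
    by unfold_locales (use assms in auto)
  show "int (num_inj_pd1 n c) =
          int (ds!0) - 1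
          + (\<Sum>j\<in>{1..length as - 2}. max (int (ds!j) - kval as ds j - 1) 0)
          + int (as!(length as - 1)) - 1"
    unfolding num_eq using result_gen h by simp
qed

end
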